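(* Let $d\ge2$ and let $\mathbf{p}^\star$ be a maximizer of the problem $$\max\Big\{\frac{\prod_{i=1}^dp_i}{D_1(\mathbf{p})^d}\;:\;\mathbf{p}\in(0,\infty)^d,\ p_1=1,\ D_1(\mathbf{p})^2\ge D_j(\mathbf{p})^2\text{ for all }j\in\{2,\dots,d\}\Big\}.$$ Then $\mathbf{p}^\star$ is a solution of the Karush–Kuhn–Tucker system below with multipliers $(\mu_2,\dots,\mu_d)\neq\mathbf{0}$, i.e. there exists $k\in\{2,\dots,d\}$ with $\mu_k>0$.
   Context: For $k\in\{1,\dots,d\}$ let $w_{k,i}=0$ for $i<k$, $w_{k,k}=k$, $w_{k,i}=i-1$ for $k<i\le d$, and $D_k(\mathbf{p})=\sqrt{\sum_{i=1}^dw_{k,i}^2p_i^2}$. Let $F_1(p_2,\dots,p_d)=\prod_{i=2}^dp_i/D_1(1,p_2,\dots,p_d)^d$, and regard $D_k$ as functions of $(p_2,\dots,p_d)$ with $p_1=1$. The Karush–Kuhn–Tucker system is: for all $j\in\{2,\dots,d\}$, $$\frac{\partial F_1}{\partial p_j}(\mathbf{p})=\sum_{i=2}^d\mu_i\frac{\partial}{\partial p_j}\big(D_i(\mathbf{p})^2-D_1(\mathbf{p})^2\big),\qquad \mu_j\big(D_j(\mathbf{p})^2-D_1(\mathbf{p})^2\big)=0,\qquad \mu_j\ge0,\qquad D_j(\mathbf{p})\le D_1(\mathbf{p}).$$ *)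

theory Defs
  imports "HOL-Analysis.Analysis"
begin

definition wt :: "nat \<Rightarrow> nat \<Rightarrow> real" where
  "wt k i = (if i < k then 0 else if i = k then real k else real i - 1)"

text \<open>D_k(p) = sqrt (sum_{i=1}^d w_{k,i}^2 p_i^2); vectors p are functions nat => real,
  only the coordinates 1..d matter.\<close>
definition Dk :: "nat \<Rightarrow> nat \<Rightarrow> (nat \<Rightarrow> real) \<Rightarrow> real" where
  "Dk d k p = sqrt (\<Sum>i=1..d. (wt k i)^2 * (p i)^2)"

definition F1 :: "nat \<Rightarrow> (nat \<Rightarrow> real) \<Rightarrow> real" where
  "F1 d p = (\<Prod>i=2..d. p i) / (Dk d 1 (p(1 := 1))) ^ d"

definition pderiv_at :: "((nat \<Rightarrow> real) \<Rightarrow> real) \<Rightarrow> nat \<Rightarrow> (nat \<Rightarrow> real) \<Rightarrow> real" where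
  "pderiv_at f j p = deriv (\<lambda>t. f (p(j := t))) (p j)"

definition feasible :: "nat \<Rightarrow> (nat \<Rightarrow> real) \<Rightarrow> bool" where
  "feasible d p \<longleftrightarrow> (\<forall>i\<in>{1..d}. p i > 0) \<and> p 1 = 1 \<and>
     (\<forall>j\<in>{2..d}. (Dk d 1 p)^2 \<ge> (Dk d j p)^2)"

end

theory Submission
  imports Defs
begin

lemma tri_solve:
  fixes T :: "nat \<Rightarrow> nat \<Rightarrow> real"
  assumes up: "\<And>r c. lo \<le> r \<Longrightarrow> r < c \<Longrightarrow> T r c = 0"
    and dg: "\<And>r. lo \<le> r \<Longrightarrow> T r r \<noteq> 0"
  shows "\<exists>x. \<forall>r\<in>{lo..<n}. (\<Sum>c\<in>{lo..<n}. T r c * x c) = w r"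
proof (induction n)
  case 0
  then show ?case by simp
next
  case (Suc n)
  show ?case
  proof (cases "lo \<le> n")
    case False
    then show ?thesis by simp
  next
    case True
    from Suc obtain x where x: "\<forall>r\<in>{lo..<n}. (\<Sum>c\<in>{lo..<n}. T r c * x c) = w r" by blast
    define x' where "x' = x(n := (w n - (\<Sum>c\<in>{lo..<n}. T n c * x c)) / T n n)"
    have e: "{lo..<Suc n} = insert n {lo..<n}" using True by auto
    have s: "(\<Sum>c\<in>{lo..<n}. T r c * x' c) = (\<Sum>c\<in>{lo..<n}. T r c * x c)" for r
      by (rule sum.cong) (auto simp: x'_def)
    have "\<forall>r\<in>{lo..<Suc n}. (\<Sum>c\<in>{lo..<Suc n}. T r c * x' c) = w r"
    proof
      fix r assume r: "r \<in> {lo..<Suc n}"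
      have "(\<Sum>c\<in>{lo..<Suc n}. T r c * x' c) = T r n * x' n + (\<Sum>c\<in>{lo..<n}. T r c * x c)"
        unfolding e using s by simp
      also have "\<dots> = w r"
      proof (cases "r = n")
        case True
        then show ?thesis using dg[of n] \<open>lo \<le> n\<close> by (simp add: x'_def field_simps)
      next
        case False
        then have "r < n" "lo \<le> r" using r by auto
        then show ?thesis using up[of r n] x r by auto
      qed
      finally show "(\<Sum>c\<in>{lo..<Suc n}. T r c * x' c) = w r" .
    qed
    then show ?thesis by blast
  qed
qed

definition SS :: "nat \<Rightarrow> (nat \<Rightarrow> real) \<Rightarrow> real" where
  "SS d p = 1 + (\<Sum>i=2..d. (wt 1 i)^2 * (p i)^2)"

lemma wt11: "wt 1 1 = 1" by (simp add: wt_def)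
lemma wt11': "wt (Suc 0) (Suc 0) = 1" by (simp add: wt_def)

lemma SS_pos: "SS d p \<ge> 1"
  unfolding SS_def by (simp add: sum_nonneg)

lemma sum1: "d \<ge> 1 \<Longrightarrow> (\<Sum>i=1..d. (wt 1 i)^2 * ((p(1:=1)) i)^2) = SS d p"
proof -
  assume d: "d \<ge> 1"
  have e: "{1..d} = insert 1 {2..d}" using d by auto
  show ?thesis unfolding e SS_def by (simp add: wt11')
qed

lemma Dk1_eq: "d \<ge> 1 \<Longrightarrow> Dk d 1 (p(1:=1)) = sqrt (SS d p)"
  unfolding Dk_def using sum1 by simp

lemma F1_alt: "d \<ge> 1 \<Longrightarrow> F1 d p = (\<Prod>i=2..d. p i) / sqrt (SS d p) ^ d"
  unfolding F1_def using Dk1_eq by simp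

definition AA :: "nat \<Rightarrow> (nat \<Rightarrow> real) \<Rightarrow> nat \<Rightarrow> real" where
  "AA d r k = (\<Prod>i\<in>{2..d}-{k}. r i) / sqrt (SS d r) ^ d
     - (\<Prod>i=2..d. r i) * real d * (wt 1 k)^2 * r k / sqrt (SS d r) ^ (d+2)"

lemma alg1:
  fixes D :: real assumes "D > 0" "d \<ge> 1"
  shows "(Np * D^d - N * (real d * (inverse D / 2 * Sp * D^(d - Suc 0)))) / (D^d * D^d)
     = Np / D^d - N * real d * (Sp/2) / D^(d+2)"
proof -
  obtain m where m: "d = Suc m" using assms(2) by (cases d) auto
  show ?thesis using assms(1) unfolding m by (simp add: field_simps power2_eq_square)
qed

lemma F1_deriv:
  assumes d: "d \<ge> 1"
  shows "((\<lambda>t. F1 d (\<lambda>i. q i + t * v i)) has_real_derivative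
          (\<Sum>k=2..d. AA d (\<lambda>i. q i + s * v i) k * v k)) (at s)"
proof -
  define r where "r = (\<lambda>i. q i + s * v i)"
  have N: "((\<lambda>t. \<Prod>i=2..d. q i + t * v i) has_real_derivative
      (\<Sum>k=2..d. v k * (\<Prod>i\<in>{2..d}-{k}. r i))) (at s)"
    unfolding r_def apply (rule has_field_derivative_prod) 
    by (intro derivative_eq_intros) auto
  have S: "((\<lambda>t. SS d (\<lambda>i. q i + t * v i)) has_real_derivative
      (\<Sum>k=2..d. 2 * (wt 1 k)^2 * r k * v k)) (at s)"
    unfolding SS_def r_def
    by (intro derivative_eq_intros) (auto simp: power2_eq_square algebra_simps)
  have Spos: "SS d r > 0" using SS_pos[of d r] by linarith
  have Q: "((\<lambda>t. sqrt (SS d (\<lambda>i. q i + t * v i))) has_real_derivative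
      (inverse (sqrt (SS d r)) / 2 * (\<Sum>k=2..d. 2 * (wt 1 k)^2 * r k * v k))) (at s)"
    using DERIV_chain2[OF DERIV_real_sqrt[OF Spos[unfolded r_def]] S] unfolding r_def by simp
  have Dpos: "sqrt (SS d r) > 0" using Spos by simp
  have F: "((\<lambda>t. (\<Prod>i=2..d. q i + t * v i) / sqrt (SS d (\<lambda>i. q i + t * v i)) ^ d) has_real_derivative
     ((\<Sum>k=2..d. v k * (\<Prod>i\<in>{2..d}-{k}. r i)) * sqrt (SS d r) ^ d - (\<Prod>i=2..d. r i) *
       (real d * (inverse (sqrt (SS d r)) / 2 * (\<Sum>k=2..d. 2 * (wt 1 k)^2 * r k * v k) * sqrt (SS d r) ^ (d - Suc 0))))
      / (sqrt (SS d r) ^ d * sqrt (SS d r) ^ d)) (at s)"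
    using DERIV_divide[OF N DERIV_power[OF Q, of d]] Dpos unfolding r_def by simp
  have E: "(\<lambda>t. F1 d (\<lambda>i. q i + t * v i)) = (\<lambda>t. (\<Prod>i=2..d. q i + t * v i) / sqrt (SS d (\<lambda>i. q i + t * v i)) ^ d)"
    using F1_alt[OF d] by auto
  have "(\<Sum>k=2..d. AA d r k * v k) = (\<Sum>k=2..d. v k * (\<Prod>i\<in>{2..d}-{k}. r i)) / sqrt (SS d r) ^ d
      - (\<Prod>i=2..d. r i) * real d * ((\<Sum>k=2..d. 2 * (wt 1 k)^2 * r k * v k)/2) / sqrt (SS d r) ^ (d+2)"
    unfolding AA_def sum_divide_distrib sum_distrib_left sum_subtractf[symmetric]
    by (intro sum.cong) (auto simp: field_simps)
  also have "\<dots> = ((\<Sum>k=2..d. v k * (\<Prod>i\<in>{2..d}-{k}. r i)) * sqrt (SS d r) ^ d - (\<Prod>i=2..d. r i) *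
       (real d * (inverse (sqrt (SS d r)) / 2 * (\<Sum>k=2..d. 2 * (wt 1 k)^2 * r k * v k) * sqrt (SS d r) ^ (d - Suc 0))))
      / (sqrt (SS d r) ^ d * sqrt (SS d r) ^ d)"
    by (rule alg1[OF Dpos d, symmetric])
  finally show ?thesis using F unfolding E r_def by simp
qed


lemma delta_sum: "j \<in> A \<Longrightarrow> finite A \<Longrightarrow> (\<Sum>k\<in>A. f k * (if k = j then 1 else 0)) = (f j :: real)"
  by (simp add: if_distrib cong: if_cong)

lemma pderiv_F:
  assumes d: "d \<ge> 1" and j: "j \<in> {2..d}"
  shows "pderiv_at (F1 d) j ps = AA d ps j"
proof -
  define q where "q = ps(j:=0)"
  define v where "v = (\<lambda>i. if i = j then 1 else (0::real))"
  have e1: "(\<lambda>t. F1 d (ps(j:=t))) = (\<lambda>t. F1 d (\<lambda>i. q i + t * v i))"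
    by (rule ext, rule arg_cong[where f="F1 d"]) (auto simp: q_def v_def)
  have e2: "(\<lambda>i. q i + ps j * v i) = ps" by (auto simp: q_def v_def)
  have "((\<lambda>t. F1 d (ps(j:=t))) has_real_derivative AA d ps j) (at (ps j))"
    using F1_deriv[OF d, of q v "ps j", unfolded e2] j unfolding e1 by (simp add: v_def delta_sum)
  then show ?thesis unfolding pderiv_at_def by (rule DERIV_imp_deriv)
qed

lemma Dk_sq: "(Dk d i p)^2 = (\<Sum>l=1..d. (wt i l)^2 * (p l)^2)"
  unfolding Dk_def by (simp add: sum_nonneg)

definition CC :: "nat \<Rightarrow> nat \<Rightarrow> (nat \<Rightarrow> real) \<Rightarrow> real" where
  "CC i j p = 2 * ((wt i j)^2 - (wt 1 j)^2) * p j"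

lemma G_expand:
  "(Dk d i (\<lambda>l. p l + t * v l))^2 - (Dk d 1 (\<lambda>l. p l + t * v l))^2 =
   ((Dk d i p)^2 - (Dk d 1 p)^2) + t * ((\<Sum>l=1..d. CC i l p * v l) + t * (\<Sum>l=1..d. ((wt i l)^2 - (wt 1 l)^2) * (v l)^2))"
  unfolding Dk_sq CC_def sum_subtractf[symmetric] sum_distrib_left sum.distrib[symmetric]
  by (intro sum.cong) (auto simp: power2_eq_square algebra_simps)

lemma pderiv_G:
  assumes j: "j \<in> {1..d}"
  shows "pderiv_at (\<lambda>p. (Dk d i p)^2 - (Dk d 1 p)^2) j ps = CC i j ps"
proof -
  define q where "q = ps(j:=0)"
  define v where "v = (\<lambda>i. if i = j then 1 else (0::real))"
  have e1: "(\<lambda>t. (Dk d i (ps(j:=t)))^2 - (Dk d 1 (ps(j:=t)))^2) = (\<lambda>t. (Dk d i (\<lambda>l. q l + t * v l))^2 - (Dk d 1 (\<lambda>l. q l + t * v l))^2)"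
  proof -
    have ea: "\<And>t. ps(j:=t) = (\<lambda>l. q l + t * v l)" by (auto simp: q_def v_def)
    show ?thesis by (simp add: ea)
  qed
  have s1: "(\<Sum>l=1..d. CC i l q * v l) = 0"
    using j by (simp add: v_def delta_sum q_def CC_def)
  have s2: "(\<Sum>l=1..d. ((wt i l)^2 - (wt 1 l)^2) * (v l)^2) = (wt i j)^2 - (wt 1 j)^2"
  proof -
    have "(\<Sum>l=1..d. ((wt i l)^2 - (wt 1 l)^2) * (v l)^2) = (\<Sum>l=1..d. ((wt i l)^2 - (wt 1 l)^2) * (if l = j then 1 else 0))"
      by (intro sum.cong) (auto simp: v_def)
    then show ?thesis using j by (simp add: delta_sum)
  qed
  have "((\<lambda>t. (Dk d i (ps(j:=t)))^2 - (Dk d 1 (ps(j:=t)))^2) has_real_derivative CC i j ps) (at (ps j))"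
    unfolding e1 G_expand s1 s2
    by (auto intro!: derivative_eq_intros simp: CC_def)
  then show ?thesis unfolding pderiv_at_def by (rule DERIV_imp_deriv)
qed

lemma objF:
  assumes d: "d \<ge> 1" and p1: "p 1 = 1"
  shows "(\<Prod>i=1..d. p i) / (Dk d 1 p) ^ d = F1 d p"
proof -
  have e: "{1..d} = insert 1 {2..d}" using d by auto
  have pp: "p(1:=1) = p" using p1 by auto
  show ?thesis unfolding F1_def pp unfolding e using p1 by simp
qed


lemma AA_nonzero:
  assumes d: "d \<ge> 2" and pos: "\<forall>i\<in>{1..d}. ps i > 0" and p1: "ps 1 = 1"
    and c2: "(Dk d 2 ps)^2 \<le> (Dk d 1 ps)^2"
    and z: "\<forall>j\<in>{2..d}. AA d ps j = 0"
  shows False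
proof -
  define S where "S = SS d ps"
  have Spos: "S > 0" using SS_pos[of d ps] by (simp add: S_def)
  define D where "D = sqrt S"
  have Dpos: "D > 0" using Spos by (simp add: D_def)
  have D2: "D^2 = S" using Spos by (simp add: D_def)
  have dpos: "real d > 0" using d by simp
  have each: "(wt 1 j)^2 * (ps j)^2 = S / real d" if j: "j \<in> {2..d}" for j
  proof -
    define P where "P = (\<Prod>i\<in>{2..d}-{j}. ps i)"
    have Ppos: "P > 0" unfolding P_def using pos by (intro prod_pos) auto
    have N: "(\<Prod>i=2..d. ps i) = ps j * P" unfolding P_def using j by (simp add: prod.remove)
    have pj: "ps j > 0" using pos j by auto
    have Dd: "D^(d+2) = D^d * S" unfolding D2[symmetric] by (rule power_add)
    have Pj: "(\<Prod>i\<in>{2..d}-{j}. ps i) = P" by (simp add: P_def)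
    have "0 = P / D^d - ps j * P * real d * (wt 1 j)^2 * ps j / (D^d * S)"
      using z[rule_format, OF j] unfolding AA_def S_def[symmetric] D_def[symmetric] N Dd Pj by simp
    then have "P * (S - real d * (wt 1 j)^2 * (ps j)^2) = 0"
      using Dpos Spos by (auto simp: field_simps power2_eq_square)
    then have "S = real d * (wt 1 j)^2 * (ps j)^2" using Ppos by simp
    then show ?thesis using Spos dpos by (simp add: field_simps)
  qed
  have "S = 1 + (\<Sum>i=2..d. (wt 1 i)^2 * (ps i)^2)" by (simp add: S_def SS_def)
  also have "\<dots> = 1 + (\<Sum>i=2..d. S / real d)"
    using each by (intro arg_cong2[where f="(+)"] sum.cong) auto
  also have "\<dots> = 1 + (real d - 1) * (S / real d)" using d by (simp add: of_nat_diff)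
  finally have Sd: "S = real d" using dpos by (simp add: field_simps)
  have w12: "wt 1 2 = 1" by (simp add: wt_def)
  have p2: "(ps 2)^2 = 1" using each[of 2] d Sd dpos w12 by simp
  have e: "{1..d} = insert 1 (insert 2 {3..d})" using d by auto
  have z3: "(\<Sum>l=3..d. ((wt 2 l)^2 - (wt 1 l)^2) * (ps l)^2) = 0"
    by (intro sum.neutral) (auto simp: wt_def)
  have "(Dk d 2 ps)^2 - (Dk d 1 ps)^2 = (\<Sum>l=1..d. ((wt 2 l)^2 - (wt 1 l)^2) * (ps l)^2)"
    unfolding Dk_sq sum_subtractf[symmetric] by (simp add: algebra_simps)
  also have "\<dots> = 3 * (ps 2)^2 - 1" unfolding e using z3 p1 by (simp add: wt_def)
  finally show False using c2 p2 by simp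
qed

theorem lemma5:
  fixes d :: nat and ps :: "nat \<Rightarrow> real"
  assumes "d \<ge> 2"
    and "feasible d ps"
    and "\<forall>q. feasible d q \<longrightarrow>
           (\<Prod>i=1..d. q i) / (Dk d 1 q) ^ d \<le> (\<Prod>i=1..d. ps i) / (Dk d 1 ps) ^ d"
  shows "\<exists>\<mu> :: nat \<Rightarrow> real.
           (\<forall>j\<in>{2..d}.
              pderiv_at (F1 d) j ps =
                (\<Sum>i=2..d. \<mu> i * pderiv_at (\<lambda>p. (Dk d i p)^2 - (Dk d 1 p)^2) j ps)) \<and>
           (\<forall>j\<in>{2..d}. \<mu> j * ((Dk d j ps)^2 - (Dk d 1 ps)^2) = 0 \<and> \<mu> j \<ge> 0 \<and>
              Dk d j ps \<le> Dk d 1 ps) \<and>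
           (\<exists>k\<in>{2..d}. \<mu> k > 0)"
proof -
  have d1: "d \<ge> 1" using assms(1) by simp
  have pos: "\<forall>i\<in>{1..d}. ps i > 0" and p1: "ps 1 = 1"
    and con: "\<forall>j\<in>{2..d}. (Dk d 1 ps)^2 \<ge> (Dk d j ps)^2"
    using assms(2) unfolding feasible_def by auto
  define G where "G i p = (Dk d i p)^2 - (Dk d 1 p)^2" for i p
  define a where "a j = AA d ps j" for j
  have Gle: "\<forall>j\<in>{2..d}. G j ps \<le> 0" using con by (auto simp: G_def)
  have CCup: "CC i j ps = 0" if "2 \<le> i" "i < j" for i j
    using that by (simp add: CC_def wt_def)
  have CCdg: "CC i i ps \<noteq> 0" if i: "i \<in> {2..d}" for i
  proof -
    have "CC i i ps = 2 * (2 * real i - 1) * ps i" using i by (simp add: CC_def wt_def power2_eq_square algebra_simps)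
    moreover have "2 * real i - 1 > 0" "ps i > 0" using i pos by auto
    ultimately show ?thesis by simp
  qed
  have K: "(\<Sum>j=2..d. a j * v j) \<le> 0"
    if v1: "v 1 = 0" and act: "\<forall>i\<in>{2..d}. G i ps = 0 \<longrightarrow> (\<Sum>j=2..d. CC i j ps * v j) < 0" for v
  proof (rule ccontr)
    assume "\<not> ?thesis"
    hence gt: "(\<Sum>j=2..d. a j * v j) > 0" by simp
    define \<phi> where "\<phi> t = F1 d (\<lambda>i. ps i + t * v i)" for t
    have der: "(\<phi> has_real_derivative (\<Sum>j=2..d. a j * v j)) (at 0)"
      using F1_deriv[OF d1, of ps v 0] unfolding \<phi>_def a_def by simp
    obtain \<delta> where \<delta>: "\<delta> > 0" "\<forall>h>0. h < \<delta> \<longrightarrow> \<phi> 0 < \<phi> (0 + h)"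
      using DERIV_pos_inc_right[OF der gt] by blast
    have ev1: "eventually (\<lambda>t. \<phi> 0 < \<phi> t) (at_right (0::real))"
      unfolding eventually_at_right_field using \<delta> by auto
    have ev2: "eventually (\<lambda>t. \<forall>i\<in>{1..d}. ps i + t * v i > 0) (at_right (0::real))"
    proof (rule eventually_ball_finite, simp, rule ballI)
      fix i assume i: "i \<in> {1..d}"
      have "((\<lambda>t. ps i + t * v i) \<longlongrightarrow> ps i + 0 * v i) (at_right 0)" by (intro tendsto_intros)
      then show "eventually (\<lambda>t. ps i + t * v i > 0) (at_right 0)"
        using pos i by (auto intro: order_tendstoD)
    qed
    have ev3: "eventually (\<lambda>t. \<forall>j\<in>{2..d}. G j (\<lambda>i. ps i + t * v i) \<le> 0) (at_right (0::real))"
    proof (rule eventually_ball_finite, simp, rule ballI)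
      fix j assume j: "j \<in> {2..d}"
      define L where "L = (\<Sum>l=1..d. CC j l ps * v l)"
      define Q where "Q = (\<Sum>l=1..d. ((wt j l)^2 - (wt 1 l)^2) * (v l)^2)"
      have ex: "G j (\<lambda>i. ps i + t * v i) = G j ps + t * (L + t * Q)" for t
        unfolding G_def L_def Q_def by (rule G_expand)
      have e1: "{1..d} = insert 1 {2..d}" using d1 by auto
      have L2: "L = (\<Sum>l=2..d. CC j l ps * v l)" unfolding L_def e1 using v1 by simp
      show "eventually (\<lambda>t. G j (\<lambda>i. ps i + t * v i) \<le> 0) (at_right 0)"
      proof (cases "G j ps = 0")
        case True
        then have Lneg: "L < 0" using act j L2 by auto
        have "((\<lambda>t. L + t * Q) \<longlongrightarrow> L + 0 * Q) (at_right 0)" by (intro tendsto_intros)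
        then have "eventually (\<lambda>t. L + t * Q < 0) (at_right 0)" using Lneg by (auto intro: order_tendstoD)
        then show ?thesis using eventually_at_right_less[of "0::real"]
          by eventually_elim (simp add: ex True mult_pos_neg less_imp_le)
      next
        case False
        then have Gneg: "G j ps < 0" using Gle j by force
        have "((\<lambda>t. G j ps + t * (L + t * Q)) \<longlongrightarrow> G j ps + 0 * (L + 0 * Q)) (at_right 0)" by (intro tendsto_intros)
        then have "eventually (\<lambda>t. G j ps + t * (L + t * Q) < 0) (at_right 0)" using Gneg by (auto intro: order_tendstoD)
        then show ?thesis by eventually_elim (simp add: ex)
      qed
    qed
    have "eventually (\<lambda>t. \<phi> 0 < \<phi> t \<and> (\<forall>i\<in>{1..d}. ps i + t * v i > 0) \<and> (\<forall>j\<in>{2..d}. G j (\<lambda>i. ps i + t * v i) \<le> 0)) (at_right (0::real))"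
      using ev1 ev2 ev3 by eventually_elim auto
    moreover have nb: "at_right (0::real) \<noteq> bot"
      using trivial_limit_at_right_real[of "0::real"] eventually_False by metis
    ultimately obtain t where t: "\<phi> 0 < \<phi> t" "\<forall>i\<in>{1..d}. ps i + t * v i > 0" "\<forall>j\<in>{2..d}. G j (\<lambda>i. ps i + t * v i) \<le> 0"
      using eventually_happens'[OF nb] by blast
    define q where "q = (\<lambda>i. ps i + t * v i)"
    have q1: "q 1 = 1" using p1 v1 by (simp add: q_def)
    have fq: "feasible d q" unfolding feasible_def using t q1 by (auto simp: q_def G_def)
    have "(\<Prod>i=1..d. q i) / (Dk d 1 q) ^ d \<le> (\<Prod>i=1..d. ps i) / (Dk d 1 ps) ^ d"
      using assms(3) fq by blast
    then have "F1 d q \<le> F1 d ps" unfolding objF[of d q, OF d1 q1] objF[of d ps, OF d1 p1] .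
    moreover have "\<phi> t = F1 d q" "\<phi> 0 = F1 d ps" by (simp_all add: \<phi>_def q_def)
    ultimately show False using t(1) by simp
  qed
  obtain \<mu> where mu: "\<forall>j\<in>{2..d}. a j = (\<Sum>i=2..d. \<mu> i * CC i j ps)"
  proof -
    define T where "T r c = (if r \<le> d \<and> c \<le> d then CC (d+2-c) (d+2-r) ps else if r = c then 1 else 0)" for r c
    have "\<exists>x. \<forall>r\<in>{2..<Suc d}. (\<Sum>c\<in>{2..<Suc d}. T r c * x c) = a (d+2-r)"
    proof (rule tri_solve)
      fix r c :: nat assume rc: "2 \<le> r" "r < c"
      show "T r c = 0"
      proof (cases "c \<le> d")
        case True
        then show ?thesis using rc CCup[of "d+2-c" "d+2-r"] by (simp add: T_def)
      next
        case False
        then show ?thesis using rc by (simp add: T_def)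
      qed
    next
      fix r :: nat assume r: "2 \<le> r"
      show "T r r \<noteq> 0"
      proof (cases "r \<le> d")
        case True
        then have "d+2-r \<in> {2..d}" using r by auto
        then show ?thesis using True CCdg[of "d+2-r"] by (simp add: T_def)
      qed (simp add: T_def)
    qed
    then obtain x where x: "\<forall>r\<in>{2..<Suc d}. (\<Sum>c\<in>{2..<Suc d}. T r c * x c) = a (d+2-r)" by blast
    define \<mu> where "\<mu> i = x (d+2-i)" for i
    have "\<forall>j\<in>{2..d}. a j = (\<Sum>i=2..d. \<mu> i * CC i j ps)"
    proof
      fix j assume j: "j \<in> {2..d}"
      have r: "d+2-j \<in> {2..<Suc d}" using j by auto
      have eS: "{2..<Suc d} = {2..d}" by auto
      have "a j = (\<Sum>c\<in>{2..<Suc d}. T (d+2-j) c * x c)" using x r j by auto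
      also have "\<dots> = (\<Sum>c=2..d. CC (d+2-c) j ps * x c)"
        unfolding eS using j by (intro sum.cong) (auto simp: T_def)
      also have "\<dots> = (\<Sum>i=2..d. \<mu> i * CC i j ps)"
        by (subst sum.atLeastAtMost_rev[of "\<lambda>i. \<mu> i * CC i j ps" 2 d]) (auto intro!: sum.cong simp: \<mu>_def)
      finally show "a j = (\<Sum>i=2..d. \<mu> i * CC i j ps)" .
    qed
    then show ?thesis using that by blast
  qed
  have K2: "(\<Sum>i=2..d. \<mu> i * w i) \<le> 0" if wneg: "\<forall>i\<in>{2..d}. G i ps = 0 \<longrightarrow> w i < 0" for w
  proof -
    define T where "T r c = (if r \<le> d then CC r c ps else if r = c then 1 else 0)" for r c
    have "\<exists>x. \<forall>r\<in>{2..<Suc d}. (\<Sum>c\<in>{2..<Suc d}. T r c * x c) = w r"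
      by (rule tri_solve) (auto simp: T_def CCup CCdg)
    then obtain x where x: "\<forall>r\<in>{2..<Suc d}. (\<Sum>c\<in>{2..<Suc d}. T r c * x c) = w r" by blast
    define v where "v = x(1:=0)"
    have eS: "{2..<Suc d} = {2..d}" by auto
    have sv: "(\<Sum>j=2..d. CC i j ps * v j) = w i" if i: "i \<in> {2..d}" for i
    proof -
      have "(\<Sum>j=2..d. CC i j ps * v j) = (\<Sum>c\<in>{2..<Suc d}. T i c * x c)"
        unfolding eS using i by (intro sum.cong) (auto simp: T_def v_def)
      then show ?thesis using x i by auto
    qed
    have "(\<Sum>j=2..d. a j * v j) \<le> 0"
    proof (rule K)
      show "v 1 = 0" by (simp add: v_def)
      show "\<forall>i\<in>{2..d}. G i ps = 0 \<longrightarrow> (\<Sum>j=2..d. CC i j ps * v j) < 0"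
        using sv wneg by auto
    qed
    moreover have "(\<Sum>j=2..d. a j * v j) = (\<Sum>i=2..d. \<mu> i * w i)"
    proof -
      have "(\<Sum>j=2..d. a j * v j) = (\<Sum>j=2..d. \<Sum>i=2..d. \<mu> i * CC i j ps * v j)"
        using mu by (auto intro!: sum.cong simp: sum_distrib_right)
      also have "\<dots> = (\<Sum>i=2..d. \<Sum>j=2..d. \<mu> i * CC i j ps * v j)" by (rule sum.swap)
      also have "\<dots> = (\<Sum>i=2..d. \<mu> i * w i)"
      proof (intro sum.cong refl)
        fix i assume i: "i \<in> {2..d}"
        have "(\<Sum>j=2..d. \<mu> i * CC i j ps * v j) = \<mu> i * (\<Sum>j=2..d. CC i j ps * v j)"
          by (simp add: sum_distrib_left mult.assoc)
        then show "(\<Sum>j=2..d. \<mu> i * CC i j ps * v j) = \<mu> i * w i" using sv[OF i] by simp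
      qed
      finally show ?thesis .
    qed
    ultimately show ?thesis by simp
  qed
  have key: "\<mu> j \<ge> 0 \<and> (G j ps < 0 \<longrightarrow> \<mu> j = 0)" if j: "j \<in> {2..d}" for j
  proof -
    have gen: False if c: "c * \<mu> j > 0" and cok: "G j ps = 0 \<longrightarrow> c < 0" for c
    proof -
      define R where "R = (\<Sum>i\<in>{2..d}-{j}. \<mu> i)"
      define \<epsilon> where "\<epsilon> = c * \<mu> j / (2 * (\<bar>R\<bar> + 1))"
      have den: "2 * (\<bar>R\<bar> + 1) > 0" by (simp add: add_nonneg_pos)
      have epos: "\<epsilon> > 0" using c den by (simp add: \<epsilon>_def)
      define w where "w i = (if i = j then c else - \<epsilon>)" for i
      have "(\<Sum>i=2..d. \<mu> i * w i) \<le> 0" by (rule K2) (auto simp: w_def epos cok)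
      moreover have "(\<Sum>i=2..d. \<mu> i * w i) = c * \<mu> j - \<epsilon> * R"
      proof -
        have "(\<Sum>i=2..d. \<mu> i * w i) = \<mu> j * w j + (\<Sum>i\<in>{2..d}-{j}. \<mu> i * w i)"
          using j by (simp add: sum.remove)
        also have "(\<Sum>i\<in>{2..d}-{j}. \<mu> i * w i) = (\<Sum>i\<in>{2..d}-{j}. - \<epsilon> * \<mu> i)"
          by (intro sum.cong) (auto simp: w_def)
        finally show ?thesis by (simp add: w_def R_def sum_distrib_left sum_negf)
      qed
      moreover have "\<epsilon> * R < c * \<mu> j"
      proof -
        have "\<epsilon> * R \<le> \<epsilon> * \<bar>R\<bar>" using epos by (simp add: mult_left_mono)
        also have "\<dots> < \<epsilon> * (2 * (\<bar>R\<bar> + 1))" using epos by (simp add: mult_strict_left_mono)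
        also have "\<dots> = c * \<mu> j" using den by (simp add: \<epsilon>_def)
        finally show ?thesis .
      qed
      ultimately show False by linarith
    qed
    have m0: "\<mu> j \<ge> 0"
    proof (rule ccontr)
      assume "\<not> \<mu> j \<ge> 0"
      then show False using gen[of "-1"] by simp
    qed
    have "G j ps < 0 \<longrightarrow> \<mu> j = 0"
    proof
      assume G: "G j ps < 0"
      show "\<mu> j = 0"
      proof (rule ccontr)
        assume "\<mu> j \<noteq> 0"
        then have "\<mu> j * \<mu> j > 0" by (auto simp: zero_less_mult_iff linorder_neq_iff)
        then show False using gen[of "\<mu> j"] G by simp
      qed
    qed
    then show ?thesis using m0 by simp
  qed
  have P1: "\<forall>j\<in>{2..d}. pderiv_at (F1 d) j ps =
                (\<Sum>i=2..d. \<mu> i * pderiv_at (\<lambda>p. (Dk d i p)^2 - (Dk d 1 p)^2) j ps)"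
  proof
    fix j assume j: "j \<in> {2..d}"
    have j1: "j \<in> {1..d}" using j by auto
    show "pderiv_at (F1 d) j ps = (\<Sum>i=2..d. \<mu> i * pderiv_at (\<lambda>p. (Dk d i p)^2 - (Dk d 1 p)^2) j ps)"
      unfolding pderiv_F[OF d1 j] pderiv_G[OF j1] using mu j by (simp add: a_def)
  qed
  have P2: "\<forall>j\<in>{2..d}. \<mu> j * ((Dk d j ps)^2 - (Dk d 1 ps)^2) = 0 \<and> \<mu> j \<ge> 0 \<and> Dk d j ps \<le> Dk d 1 ps"
  proof
    fix j assume j: "j \<in> {2..d}"
    have "\<mu> j * G j ps = 0"
    proof (cases "G j ps < 0")
      case True then show ?thesis using key[OF j] by simp
    next
      case False then have "G j ps = 0" using Gle j by force
      then show ?thesis by simp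
    qed
    moreover have "Dk d j ps \<le> Dk d 1 ps"
    proof (rule power2_le_imp_le)
      show "(Dk d j ps)^2 \<le> (Dk d 1 ps)^2" using con j by blast
      show "0 \<le> Dk d 1 ps" unfolding Dk_def by (intro real_sqrt_ge_zero sum_nonneg) simp
    qed
    ultimately show "\<mu> j * ((Dk d j ps)^2 - (Dk d 1 ps)^2) = 0 \<and> \<mu> j \<ge> 0 \<and> Dk d j ps \<le> Dk d 1 ps"
      using key[OF j] by (simp add: G_def)
  qed
  have P3: "\<exists>k\<in>{2..d}. \<mu> k > 0"
  proof (rule ccontr)
    assume "\<not> ?thesis"
    then have z: "\<forall>k\<in>{2..d}. \<mu> k = 0"
    proof (intro ballI)
      fix k assume "\<not> (\<exists>k\<in>{2..d}. \<mu> k > 0)" "k \<in> {2..d}"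
      then have "\<not> \<mu> k > 0" "\<mu> k \<ge> 0" using key by auto
      then show "\<mu> k = 0" by simp
    qed
    have "\<forall>j\<in>{2..d}. AA d ps j = 0" using mu z by (simp add: a_def)
    moreover have "(Dk d 2 ps)^2 \<le> (Dk d 1 ps)^2" using con assms(1) by auto
    ultimately show False using AA_nonzero[OF assms(1) pos p1] by blast
  qed
  show ?thesis using P1 P2 P3 by blast
qed

end
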